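(* Let $[\mu]\in\mathbb PV_n$ be a critical point of $F_n$ with $\mathrm M_\mu=c_\mu I+D_\mu$, $c_\mu\in\mathbb R$, $D_\mu\in\mathrm{Der}(\mu)$. Then $\operatorname{tr}D_\mu=0$ if and only if $D_\mu=0$.
   Context: $V_n$ is the space of bilinear maps $\mu:\mathbb C^n\times\mathbb C^n\to\mathbb C^n$ with the standard Hermitian structures. $L^\mu_XY=\mu(X,Y)$, $R^\mu_XY=\mu(Y,X)$, and for an orthonormal basis $\{X_i\}$, $\mathrm M_\mu=2\sum_i L^\mu_{X_i}(L^\mu_{X_i})^*-2\sum_i (L^\mu_{X_i})^*L^\mu_{X_i}-2\sum_i (R^\mu_{X_i})^*R^\mu_{X_i}$ (a Hermitian matrix). $F_n([\mu])=\operatorname{tr}\mathrm M_\mu^2/\|\mu\|^4$; $[\mu]$ is a critical point of $F_n$ iff $\mathrm M_\mu=c_\mu I+D_\mu$ with $c_\mu\in\mathbb R$ and $D_\mu$ a derivation of $\mu$. *)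

theory Defs
  imports "HOL-Analysis.Analysis"
begin

text \<open>A bilinear map mu : C^n x C^n -> C^n is encoded by its values on the
standard (orthonormal) basis: (mu $ i $ j) = mu(e_i, e_j) in C^n.
Every element of V_n arises uniquely this way.\<close>

type_synonym 'n alg = "complex^'n^'n^'n"

definition mu_apply :: "'n::finite alg \<Rightarrow> complex^'n \<Rightarrow> complex^'n \<Rightarrow> complex^'n" where
  "mu_apply mu x y = (\<Sum>i\<in>UNIV. \<Sum>j\<in>UNIV. (x $ i * y $ j) *s (mu $ i $ j))"

definition adj :: "complex^'n^'m \<Rightarrow> complex^'m^'n" where
  "adj A = (\<chi> i j. cnj (A $ j $ i))"

text \<open>Matrix of L^mu_{e_i} : Y |-> mu(e_i, Y) and of R^mu_{e_i} : Y |-> mu(Y, e_i).\<close>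
definition Lmat :: "'n::finite alg \<Rightarrow> 'n \<Rightarrow> complex^'n^'n" where
  "Lmat mu i = (\<chi> k j. mu $ i $ j $ k)"

definition Rmat :: "'n::finite alg \<Rightarrow> 'n \<Rightarrow> complex^'n^'n" where
  "Rmat mu i = (\<chi> k j. mu $ j $ i $ k)"

definition Mmat :: "'n::finite alg \<Rightarrow> complex^'n^'n" where
  "Mmat mu =
     2 *\<^sub>R (\<Sum>i\<in>UNIV. Lmat mu i ** adj (Lmat mu i))
   - 2 *\<^sub>R (\<Sum>i\<in>UNIV. adj (Lmat mu i) ** Lmat mu i)
   - 2 *\<^sub>R (\<Sum>i\<in>UNIV. adj (Rmat mu i) ** Rmat mu i)"

definition is_derivation :: "'n::finite alg \<Rightarrow> complex^'n^'n \<Rightarrow> bool" where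
  "is_derivation mu D \<longleftrightarrow>
     (\<forall>x y. D *v mu_apply mu x y = mu_apply mu (D *v x) y + mu_apply mu x (D *v y))"

end

theory Submission
  imports Defs
begin

lemma mu_comp: "mu_apply mu x y $ l = (\<Sum>i\<in>UNIV. \<Sum>j\<in>UNIV. x $ i * y $ j * mu$i$j$l)"
  unfolding mu_apply_def by simp

lemma axis_mult: "(\<Sum>i\<in>UNIV. axis a (1::complex) $ i * f i) = f a"
proof -
  have "(\<Sum>i\<in>UNIV. axis a (1::complex) $ i * f i) = (\<Sum>i\<in>UNIV. if i = a then f a else 0)"
    by (rule sum.cong) (auto simp: axis_def)
  thus ?thesis by simp
qed

lemma axis_mult': "(\<Sum>i\<in>UNIV. f i * axis a (1::complex) $ i) = f a"
  using axis_mult[of a f] by (simp add: mult.commute)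

lemma mu_axis_l: "mu_apply mu (axis a 1) y $ l = (\<Sum>j\<in>UNIV. y $ j * mu$a$j$l)"
proof -
  have "mu_apply mu (axis a 1) y $ l = (\<Sum>i\<in>UNIV. axis a 1 $ i * (\<Sum>j\<in>UNIV. y $ j * mu$i$j$l))"
    unfolding mu_comp by (simp add: sum_distrib_left mult.assoc)
  also have "\<dots> = (\<Sum>j\<in>UNIV. y $ j * mu$a$j$l)" by (rule axis_mult)
  finally show ?thesis .
qed

lemma mu_axis_r: "mu_apply mu x (axis b 1) $ l = (\<Sum>i\<in>UNIV. x $ i * mu$i$b$l)"
proof -
  have "mu_apply mu x (axis b 1) $ l = (\<Sum>i\<in>UNIV. x $ i * (\<Sum>j\<in>UNIV. axis b 1 $ j * mu$i$j$l))"
    unfolding mu_comp by (simp add: sum_distrib_left mult.assoc mult.left_commute)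
  also have "\<dots> = (\<Sum>i\<in>UNIV. x $ i * mu$i$b$l)" by (simp only: axis_mult)
  finally show ?thesis .
qed

lemma Dv_axis: "(D *v axis a (1::complex)) $ i = D $ i $ a"
  unfolding matrix_vector_mult_def by (simp only: vec_lambda_beta axis_mult')

lemma dercoord:
  assumes "is_derivation mu D"
  shows "(\<Sum>k\<in>UNIV. D$l$k * mu$a$b$k) = (\<Sum>i\<in>UNIV. D$i$a * mu$i$b$l) + (\<Sum>j\<in>UNIV. D$j$b * mu$a$j$l)"
proof -
  have "D *v mu_apply mu (axis a 1) (axis b 1) = mu_apply mu (D *v axis a 1) (axis b 1) + mu_apply mu (axis a 1) (D *v axis b 1)"
    using assms unfolding is_derivation_def by blast
  hence "(D *v mu_apply mu (axis a 1) (axis b 1)) $ l = mu_apply mu (D *v axis a 1) (axis b 1) $ l + mu_apply mu (axis a 1) (D *v axis b 1) $ l" by simp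
  moreover have m: "mu_apply mu (axis a 1) (axis b 1) $ k = mu$a$b$k" for k
    by (simp only: mu_axis_l axis_mult' axis_mult)
  moreover have "(D *v mu_apply mu (axis a 1) (axis b 1)) $ l = (\<Sum>k\<in>UNIV. D$l$k * mu$a$b$k)"
    unfolding matrix_vector_mult_def by (simp only: vec_lambda_beta m)
  moreover have "mu_apply mu (D *v axis a 1) (axis b 1) $ l = (\<Sum>i\<in>UNIV. D$i$a * mu$i$b$l)"
    by (simp only: mu_axis_r Dv_axis)
  moreover have "mu_apply mu (axis a 1) (D *v axis b 1) $ l = (\<Sum>j\<in>UNIV. D$j$b * mu$a$j$l)"
    by (simp only: mu_axis_l Dv_axis)
  ultimately show ?thesis by simp
qed

lemma Mcoord: "Mmat mu $ p $ q = 2 * ((\<Sum>i\<in>UNIV. \<Sum>j\<in>UNIV. mu$i$j$p * cnj (mu$i$j$q))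
   - (\<Sum>i\<in>UNIV. \<Sum>k\<in>UNIV. cnj (mu$i$p$k) * mu$i$q$k)
   - (\<Sum>i\<in>UNIV. \<Sum>k\<in>UNIV. cnj (mu$p$i$k) * mu$q$i$k))"
  by (simp add: Mmat_def matrix_matrix_mult_def adj_def Lmat_def Rmat_def scaleR_conv_of_real)

lemma Mherm: "Mmat mu $ q $ p = cnj (Mmat mu $ p $ q)"
  unfolding Mcoord by (simp add: mult.commute)

lemma swapA: "(\<Sum>p\<in>(UNIV::'a::finite set). \<Sum>q\<in>(UNIV::'b::finite set). \<Sum>i\<in>(UNIV::'c::finite set). \<Sum>j\<in>(UNIV::'d::finite set). (f p q i j :: complex))
  = (\<Sum>i\<in>UNIV. \<Sum>j\<in>UNIV. \<Sum>q\<in>UNIV. \<Sum>p\<in>UNIV. f p q i j)"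
proof -
  have "(\<Sum>p\<in>(UNIV::'a set). \<Sum>q\<in>(UNIV::'b set). \<Sum>i\<in>(UNIV::'c set). \<Sum>j\<in>(UNIV::'d set). f p q i j)
     = (\<Sum>p\<in>(UNIV::'a set). \<Sum>i\<in>UNIV. \<Sum>q\<in>UNIV. \<Sum>j\<in>UNIV. f p q i j)"
    by (rule sum.cong[OF refl], rule sum.swap)
  also have "\<dots> = (\<Sum>i\<in>UNIV. \<Sum>p\<in>UNIV. \<Sum>q\<in>UNIV. \<Sum>j\<in>UNIV. f p q i j)"
    by (rule sum.swap)
  also have "\<dots> = (\<Sum>i\<in>UNIV. \<Sum>p\<in>UNIV. \<Sum>j\<in>UNIV. \<Sum>q\<in>UNIV. f p q i j)"
    by (intro sum.cong refl sum.swap)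
  also have "\<dots> = (\<Sum>i\<in>UNIV. \<Sum>j\<in>UNIV. \<Sum>p\<in>UNIV. \<Sum>q\<in>UNIV. f p q i j)"
    by (intro sum.cong refl sum.swap)
  also have "\<dots> = (\<Sum>i\<in>UNIV. \<Sum>j\<in>UNIV. \<Sum>q\<in>UNIV. \<Sum>p\<in>UNIV. f p q i j)"
    by (intro sum.cong refl sum.swap)
  finally show ?thesis .
qed

lemma swapC: "(\<Sum>p\<in>(UNIV::'a::finite set). \<Sum>q\<in>(UNIV::'b::finite set). \<Sum>i\<in>(UNIV::'c::finite set). \<Sum>k\<in>(UNIV::'d::finite set). (f p q i k :: complex))
  = (\<Sum>p\<in>UNIV. \<Sum>i\<in>UNIV. \<Sum>k\<in>UNIV. \<Sum>q\<in>UNIV. f p q i k)"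
proof -
  have "(\<Sum>p\<in>(UNIV::'a set). \<Sum>q\<in>(UNIV::'b set). \<Sum>i\<in>(UNIV::'c set). \<Sum>k\<in>(UNIV::'d set). f p q i k)
     = (\<Sum>p\<in>(UNIV::'a set). \<Sum>i\<in>UNIV. \<Sum>q\<in>UNIV. \<Sum>k\<in>UNIV. f p q i k)"
    by (rule sum.cong[OF refl], rule sum.swap)
  also have "\<dots> = (\<Sum>p\<in>UNIV. \<Sum>i\<in>UNIV. \<Sum>k\<in>UNIV. \<Sum>q\<in>UNIV. f p q i k)"
    by (intro sum.cong refl sum.swap)
  finally show ?thesis .
qed

lemma swapB: "(\<Sum>p\<in>(UNIV::'a::finite set). \<Sum>q\<in>(UNIV::'b::finite set). \<Sum>i\<in>(UNIV::'c::finite set). \<Sum>k\<in>(UNIV::'d::finite set). (f p q i k :: complex))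
  = (\<Sum>i\<in>UNIV. \<Sum>p\<in>UNIV. \<Sum>k\<in>UNIV. \<Sum>q\<in>UNIV. f p q i k)"
proof -
  have "(\<Sum>p\<in>(UNIV::'a set). \<Sum>q\<in>(UNIV::'b set). \<Sum>i\<in>(UNIV::'c set). \<Sum>k\<in>(UNIV::'d set). f p q i k)
     = (\<Sum>p\<in>UNIV. \<Sum>i\<in>UNIV. \<Sum>k\<in>UNIV. \<Sum>q\<in>UNIV. f p q i k)"
    by (rule swapC)
  also have "\<dots> = (\<Sum>i\<in>UNIV. \<Sum>p\<in>UNIV. \<Sum>k\<in>UNIV. \<Sum>q\<in>UNIV. f p q i k)"
    by (rule sum.swap)
  finally show ?thesis .
qed

lemma trMD:
  fixes mu :: "'n::finite alg"
  assumes der: "is_derivation mu D"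
  shows "(\<Sum>p\<in>UNIV. \<Sum>q\<in>UNIV. Mmat mu $ p $ q * D $ q $ p) = 0"
proof -
  define SA where "SA = (\<Sum>p\<in>UNIV. \<Sum>q\<in>UNIV. (\<Sum>i\<in>UNIV. \<Sum>j\<in>UNIV. mu$i$j$p * cnj (mu$i$j$q)) * D$q$p)"
  define SB where "SB = (\<Sum>p\<in>UNIV. \<Sum>q\<in>UNIV. (\<Sum>i\<in>UNIV. \<Sum>k\<in>UNIV. cnj (mu$i$p$k) * mu$i$q$k) * D$q$p)"
  define SC where "SC = (\<Sum>p\<in>UNIV. \<Sum>q\<in>UNIV. (\<Sum>i\<in>UNIV. \<Sum>k\<in>UNIV. cnj (mu$p$i$k) * mu$q$i$k) * D$q$p)"
  define T1 where "T1 = (\<Sum>i\<in>UNIV. \<Sum>j\<in>UNIV. \<Sum>q\<in>UNIV. \<Sum>s\<in>UNIV. cnj (mu$i$j$q) * (D$s$i * mu$s$j$q))"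
  define T2 where "T2 = (\<Sum>i\<in>UNIV. \<Sum>j\<in>UNIV. \<Sum>q\<in>UNIV. \<Sum>t\<in>UNIV. cnj (mu$i$j$q) * (D$t$j * mu$i$t$q))"
  have "SA = (\<Sum>p\<in>UNIV. \<Sum>q\<in>UNIV. \<Sum>i\<in>UNIV. \<Sum>j\<in>UNIV. mu$i$j$p * cnj (mu$i$j$q) * D$q$p)"
    unfolding SA_def by (simp add: sum_distrib_right)
  also have "\<dots> = (\<Sum>i\<in>UNIV. \<Sum>j\<in>UNIV. \<Sum>q\<in>UNIV. \<Sum>p\<in>UNIV. mu$i$j$p * cnj (mu$i$j$q) * D$q$p)"
    by (rule swapA)
  also have "\<dots> = (\<Sum>i\<in>UNIV. \<Sum>j\<in>UNIV. \<Sum>q\<in>UNIV. cnj (mu$i$j$q) * (\<Sum>p\<in>UNIV. D$q$p * mu$i$j$p))"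
    by (simp add: sum_distrib_left mult_ac)
  also have "\<dots> = (\<Sum>i\<in>UNIV. \<Sum>j\<in>UNIV. \<Sum>q\<in>UNIV. cnj (mu$i$j$q) * ((\<Sum>s\<in>UNIV. D$s$i * mu$s$j$q) + (\<Sum>t\<in>UNIV. D$t$j * mu$i$t$q)))"
    using dercoord[OF der] by simp
  also have "\<dots> = T1 + T2"
    unfolding T1_def T2_def by (simp add: distrib_left sum_distrib_left sum.distrib)
  finally have A: "SA = T1 + T2" .
  have "SC = (\<Sum>p\<in>UNIV. \<Sum>q\<in>UNIV. \<Sum>i\<in>UNIV. \<Sum>k\<in>UNIV. cnj (mu$p$i$k) * mu$q$i$k * D$q$p)"
    unfolding SC_def by (simp add: sum_distrib_right)
  also have "\<dots> = (\<Sum>p\<in>UNIV. \<Sum>i\<in>UNIV. \<Sum>k\<in>UNIV. \<Sum>q\<in>UNIV. cnj (mu$p$i$k) * mu$q$i$k * D$q$p)"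
    by (rule swapC)
  also have "\<dots> = T1"
    unfolding T1_def by (simp add: mult_ac)
  finally have C: "SC = T1" .
  have "SB = (\<Sum>p\<in>UNIV. \<Sum>q\<in>UNIV. \<Sum>i\<in>UNIV. \<Sum>k\<in>UNIV. cnj (mu$i$p$k) * mu$i$q$k * D$q$p)"
    unfolding SB_def by (simp add: sum_distrib_right)
  also have "\<dots> = (\<Sum>i\<in>UNIV. \<Sum>p\<in>UNIV. \<Sum>k\<in>UNIV. \<Sum>q\<in>UNIV. cnj (mu$i$p$k) * mu$i$q$k * D$q$p)"
    by (rule swapB)
  also have "\<dots> = T2"
    unfolding T2_def by (simp add: mult_ac)
  finally have B: "SB = T2" .
  have "(\<Sum>p\<in>UNIV. \<Sum>q\<in>UNIV. Mmat mu $ p $ q * D $ q $ p) = 2 * (SA - SB - SC)"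
  proof -
    have eq: "Mmat mu $ p $ q * D$q$p = 2*((\<Sum>i\<in>UNIV. \<Sum>j\<in>UNIV. mu$i$j$p * cnj (mu$i$j$q)) * D$q$p)
       - 2*((\<Sum>i\<in>UNIV. \<Sum>k\<in>UNIV. cnj (mu$i$p$k) * mu$i$q$k) * D$q$p)
       - 2*((\<Sum>i\<in>UNIV. \<Sum>k\<in>UNIV. cnj (mu$p$i$k) * mu$q$i$k) * D$q$p)" for p q
      unfolding Mcoord by algebra
    show ?thesis
      unfolding SA_def SB_def SC_def eq
      by (simp only: sum_subtractf sum_distrib_left[symmetric] right_diff_distrib)
  qed
  thus ?thesis using A B C by simp
qed

theorem mainTheorem6:
  fixes mu :: "'n::finite alg" and c :: real and D :: "complex^'n^'n"
  assumes "mu \<noteq> 0"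
    and "Mmat mu = c *\<^sub>R mat 1 + D"
    and "is_derivation mu D"
  shows "trace D = 0 \<longleftrightarrow> D = 0"
proof
  assume "D = 0" thus "trace D = 0" by (simp add: trace_def)
next
  assume tr: "trace D = 0"
  have Dc: "D $ p $ q = Mmat mu $ p $ q - (if p = q then of_real c else 0)" for p q
  proof -
    have "D = Mmat mu - c *\<^sub>R mat 1" using assms(2) by simp
    thus ?thesis by (auto simp: mat_def scaleR_conv_of_real[where 'a=complex])
  qed
  have Dh: "D $ q $ p = cnj (D $ p $ q)" for p q
    unfolding Dc by (subst Mherm) auto
  have "(\<Sum>p\<in>UNIV. \<Sum>q\<in>UNIV. Mmat mu $ p $ q * D $ q $ p)
      = (\<Sum>p\<in>UNIV. \<Sum>q\<in>UNIV. D $ p $ q * D $ q $ p) + of_real c * trace D"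
  proof -
    have Mc: "Mmat mu $ p $ q * D $ q $ p = D $ p $ q * D $ q $ p + (if p = q then of_real c * D $ p $ p else 0)" for p q
      by (simp add: Dc algebra_simps)
    show ?thesis
      by (simp only: Mc sum.distrib) (simp add: trace_def sum_distrib_left)
  qed
  with trMD[OF assms(3)] tr
  have Z: "(\<Sum>p\<in>UNIV. \<Sum>q\<in>UNIV. D $ p $ q * D $ q $ p) = 0" by simp
  have "(\<Sum>p\<in>UNIV. \<Sum>q\<in>UNIV. D $ p $ q * cnj (D $ p $ q)) = (\<Sum>p\<in>UNIV. \<Sum>q\<in>UNIV. D $ p $ q * D $ q $ p)"
  proof (intro sum.cong refl)
    fix p q show "D $ p $ q * cnj (D $ p $ q) = D $ p $ q * D $ q $ p" by (simp only: Dh[where p=p and q=q])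
  qed
  with Z have "(\<Sum>p\<in>UNIV. \<Sum>q\<in>UNIV. D $ p $ q * cnj (D $ p $ q)) = 0" by simp
  hence "(\<Sum>p\<in>UNIV. \<Sum>q\<in>UNIV. complex_of_real ((norm (D $ p $ q))\<^sup>2)) = 0"
    by (simp only: complex_norm_square)
  hence "complex_of_real (\<Sum>p\<in>UNIV. \<Sum>q\<in>UNIV. (norm (D $ p $ q))\<^sup>2) = 0"
    by (simp only: of_real_sum)
  hence S: "(\<Sum>p\<in>UNIV. \<Sum>q\<in>UNIV. (norm (D $ p $ q))\<^sup>2) = 0" by (simp only: of_real_eq_0_iff)
  have nn: "0 \<le> (\<Sum>q\<in>UNIV. (norm (D $ p $ q))\<^sup>2)" for p
    by (intro sum_nonneg) simp
  have P: "\<forall>p\<in>UNIV. (\<Sum>q\<in>UNIV. (norm (D $ p $ q))\<^sup>2) = 0"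
    by (rule sum_nonneg_eq_0_iff[THEN iffD1, OF finite_class.finite_UNIV _ S]) (use nn in blast)
  have Q: "\<forall>q\<in>UNIV. (norm (D $ p $ q))\<^sup>2 = 0" for p
    by (rule sum_nonneg_eq_0_iff[THEN iffD1, OF finite_class.finite_UNIV _ P[rule_format, OF UNIV_I]]) simp
  have "D $ p $ q = 0" for p q
    using Q[of p] by simp
  then show "D = 0"
    by (simp add: vec_eq_iff)
qed

end
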